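(* Let $n\ge 4$, let $K'\subseteq[k]$ with $|K'|\ge n$, let $\pi$ assign to each $n$-element subset $S\subseteq[k]$ a string $\pi(S)$ of length $n$ that is an ordering of $S$, and suppose every $(n-1)$-element subset $R\subseteq K'$ is semi-frozen, with a fixed choice of semi-freezing function $h_R$ and wildcard index $w_R$. Let $Q\subseteq K'$ with $|Q|=n-2$, let $R,R'\subseteq K'$ be distinct $(n-1)$-element sets containing $Q$, let $r$ be the element of $R\setminus Q$ and $r'$ the element of $R'\setminus Q$. Suppose there exist distinct $q,q'\in Q$ with $h_R(q)\ne h_{R'}(q)$ and $h_R(q')\ne h_{R'}(q')$. Then, after possibly interchanging the names of $q$ and $q'$: (1) $h_R(q)=h_{R'}(r')$ and $h_R(r)=h_{R'}(q')$; (2) $h_R(q')=w_{R'}$ and $h_{R'}(q)=w_R$; (3) $h_R(q'')=h_{R'}(q'')$ for every $q''\in Q\setminus\{q,q'\}$.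
   Context: $[k]=\{1,\dots,k\}$; $\pi(S)[i]$ is the letter at position $i\in[n]$ of $\pi(S)$. For a set $R\subseteq[k]$, $\mathcal U_R$ is the set of all sets $S\subseteq[k]$ with $R\subset S$ and $|S|=|R|+1$. A set $R$ with $|R|=n-1$ is semi-frozen with semi-freezing function $h_R$ and wildcard index $w_R$ if $h_R:R\to[n]$ is one-to-one, $w_R$ is the unique index of $[n]$ not in the image of $h_R$, and for every $r\in R$ and every $S\in\mathcal U_R$, either $\pi(S)[h_R(r)]=r$ or $\pi(S)[w_R]=r$. *)

theory Defs
  imports Main
begin

text \<open>Strings of letters are lists; positions are 1-based, so the letter at
position i of a string s is s ! (i - 1).\<close>

definition letter_at :: "nat list \<Rightarrow> nat \<Rightarrow> nat" where
  "letter_at s i = s ! (i - 1)"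

definition U_sets :: "nat \<Rightarrow> nat set \<Rightarrow> nat set set" where
  "U_sets k R = {S. S \<subseteq> {1..k} \<and> R \<subset> S \<and> card S = card R + 1}"

definition semi_frozen ::
  "nat \<Rightarrow> nat \<Rightarrow> (nat set \<Rightarrow> nat list) \<Rightarrow> nat set \<Rightarrow> (nat \<Rightarrow> nat) \<Rightarrow> nat \<Rightarrow> bool" where
  "semi_frozen k n \<pi> R h w \<longleftrightarrow>
     card R = n - 1 \<and>
     inj_on h R \<and> h ` R \<subseteq> {1..n} \<and>
     {1..n} - h ` R = {w} \<and>
     (\<forall>r\<in>R. \<forall>S\<in>U_sets k R.
        letter_at (\<pi> S) (h r) = r \<or> letter_at (\<pi> S) w = r)"

end

theory Submission
  imports Defs
begin

lemma helper:
  fixes p :: "nat \<Rightarrow> nat" and h h' :: "nat \<Rightarrow> nat"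
  assumes pinj: "\<And>i j. i \<in> {1..n} \<Longrightarrow> j \<in> {1..n} \<Longrightarrow> p i = p j \<Longrightarrow> i = j"
    and pS: "\<And>i. i \<in> {1..n} \<Longrightarrow> p i \<in> R \<union> R'"
    and RQ: "R = insert r Q" and R'Q: "R' = insert r' Q"
    and rR': "r \<notin> R'" and r'R: "r' \<notin> R"
    and ih: "inj_on h R" and hr: "h ` R \<subseteq> {1..n}" and w: "{1..n} - h ` R = {w}"
    and dh: "\<forall>x\<in>R. p (h x) = x \<or> p w = x"
    and ih': "inj_on h' R'" and hr': "h' ` R' \<subseteq> {1..n}" and w': "{1..n} - h' ` R' = {w'}"
    and dh': "\<forall>x\<in>R'. p (h' x) = x \<or> p w' = x"
    and aQ: "a \<in> Q" and bQ: "b \<in> Q" and ab: "a \<noteq> b"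
    and ea: "p (h a) \<noteq> a" and eb: "p (h' b) \<noteq> b"
  shows "h a = h' r' \<and> h r = h' b \<and> h b = w' \<and> h' a = w \<and>
         (\<forall>q''\<in>Q - {a, b}. h q'' = h' q'')"
proof -
  have wn: "w \<in> {1..n}" using w by blast
  have wn': "w' \<in> {1..n}" using w' by blast
  have pwa: "p w = a" using dh ea aQ RQ by blast
  have pwb: "p w' = b" using dh' eb bQ R'Q by blast
  have fix1: "\<And>x. x \<in> R \<Longrightarrow> x \<noteq> a \<Longrightarrow> p (h x) = x" using dh pwa by metis
  have fix2: "\<And>x. x \<in> R' \<Longrightarrow> x \<noteq> b \<Longrightarrow> p (h' x) = x" using dh' pwb by metis
  have c1: "h' a = w"
    by (rule pinj) (use hr' aQ R'Q wn fix2[of a] ab pwa in auto)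
  have c2: "h b = w'"
    by (rule pinj) (use hr bQ RQ wn' fix1[of b] ab pwb in auto)
  have c3: "\<forall>q''\<in>Q - {a, b}. h q'' = h' q''"
  proof
    fix x assume x: "x \<in> Q - {a, b}"
    show "h x = h' x"
      by (rule pinj) (use hr hr' x RQ R'Q fix1[of x] fix2[of x] in auto)
  qed
  have "p (h a) = r'"
  proof (rule ccontr)
    assume ne: "p (h a) \<noteq> r'"
    have ha: "h a \<in> {1..n}" using hr aQ RQ by auto
    have "p (h a) \<in> R" using pS[OF ha] ne R'Q RQ by auto
    then obtain x where x: "x \<in> R" "p (h a) = x" by blast
    have "x \<noteq> a" using ea x by auto
    have "p (h x) = x" using fix1 x \<open>x \<noteq> a\<close> by auto
    hence "h x = h a" using pinj hr x ha by (metis image_subset_iff)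
    hence "x = a" using ih x aQ RQ by (meson inj_onD insertCI)
    thus False using \<open>x \<noteq> a\<close> by simp
  qed
  moreover have "p (h' r') = r'"
  proof -
    have "r' \<in> R'" using R'Q by simp
    moreover have "r' \<noteq> b" using r'R bQ RQ by blast
    ultimately show ?thesis using fix2 by blast
  qed
  moreover have "h a \<in> {1..n}" using hr aQ RQ by blast
  moreover have "h' r' \<in> {1..n}" using hr' R'Q by blast
  ultimately have c4: "h a = h' r'" using pinj by metis
  have "p (h' b) = r"
  proof (rule ccontr)
    assume ne: "p (h' b) \<noteq> r"
    have hb: "h' b \<in> {1..n}" using hr' bQ R'Q by auto
    have "p (h' b) \<in> R'" using pS[OF hb] ne R'Q RQ by auto
    then obtain x where x: "x \<in> R'" "p (h' b) = x" by blast
    have "x \<noteq> b" using eb x by auto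
    have "p (h' x) = x" using fix2 x \<open>x \<noteq> b\<close> by auto
    hence "h' x = h' b" using pinj hr' x hb by (metis image_subset_iff)
    hence "x = b" using ih' x bQ R'Q by (meson inj_onD insertCI)
    thus False using \<open>x \<noteq> b\<close> by simp
  qed
  moreover have "p (h r) = r"
  proof -
    have "r \<in> R" using RQ by simp
    moreover have "r \<noteq> a" using rR' aQ R'Q by blast
    ultimately show ?thesis using fix1 by blast
  qed
  moreover have "h' b \<in> {1..n}" using hr' bQ R'Q by blast
  moreover have "h r \<in> {1..n}" using hr RQ by blast
  ultimately have c5: "h r = h' b" using pinj by metis
  show ?thesis using c1 c2 c3 c4 c5 by blast
qed

theorem lemma3p13:
  fixes k n :: nat
    and Kp Q R R' :: "nat set"
    and \<pi> :: "nat set \<Rightarrow> nat list"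
    and H :: "nat set \<Rightarrow> nat \<Rightarrow> nat"
    and W :: "nat set \<Rightarrow> nat"
    and r r' q q' :: nat
  assumes n4: "n \<ge> 4"
    and Kp_sub: "Kp \<subseteq> {1..k}"
    and Kp_card: "card Kp \<ge> n"
    and pi_ord: "\<And>S. S \<subseteq> {1..k} \<Longrightarrow> card S = n \<Longrightarrow>
                   length (\<pi> S) = n \<and> distinct (\<pi> S) \<and> set (\<pi> S) = S"
    and semi: "\<And>T. T \<subseteq> Kp \<Longrightarrow> card T = n - 1 \<Longrightarrow> semi_frozen k n \<pi> T (H T) (W T)"
    and Q_sub: "Q \<subseteq> Kp" and Q_card: "card Q = n - 2"
    and R_sub: "R \<subseteq> Kp" and R_card: "card R = n - 1" and QR: "Q \<subseteq> R"
    and R'_sub: "R' \<subseteq> Kp" and R'_card: "card R' = n - 1" and QR': "Q \<subseteq> R'"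
    and RR': "R \<noteq> R'"
    and r_def: "R - Q = {r}" and r'_def: "R' - Q = {r'}"
    and qQ: "q \<in> Q" and q'Q: "q' \<in> Q" and qq': "q \<noteq> q'"
    and hq: "H R q \<noteq> H R' q" and hq': "H R q' \<noteq> H R' q'"
  shows "\<exists>(a, b) \<in> {(q, q'), (q', q)}.
           H R a = H R' r' \<and> H R r = H R' b \<and>
           H R b = W R' \<and> H R' a = W R \<and>
           (\<forall>q''\<in>Q - {q, q'}. H R q'' = H R' q'')"
proof -
  have RQ: "R = insert r Q" using r_def QR by blast
  have R'Q: "R' = insert r' Q" using r'_def QR' by blast
  have rQ: "r \<notin> Q" using r_def by blast
  have r'Q: "r' \<notin> Q" using r'_def by blast
  have rr': "r \<noteq> r'" using RQ R'Q RR' by auto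
  have rR': "r \<notin> R'" using R'Q rQ rr' by auto
  have r'R: "r' \<notin> R" using RQ r'Q rr' by auto
  define S where "S = R \<union> R'"
  have finR: "finite R" using R_card n4 card.infinite by fastforce
  have SR: "S = insert r' R" using S_def R'Q RQ by auto
  have cS: "card S = n" using SR finR r'R R_card n4 by simp
  have Sk: "S \<subseteq> {1..k}" using S_def R_sub R'_sub Kp_sub by auto
  have USR: "S \<in> U_sets k R" unfolding U_sets_def using Sk cS R_card SR r'R n4 by auto
  have USR': "S \<in> U_sets k R'" unfolding U_sets_def using Sk cS R'_card S_def rR' n4 by auto
  obtain len: "length (\<pi> S) = n" and dist: "distinct (\<pi> S)" and st: "set (\<pi> S) = S"
    using pi_ord[OF Sk cS] by blast
  define p where "p = letter_at (\<pi> S)"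
  have pinj: "\<And>i j. i \<in> {1..n} \<Longrightarrow> j \<in> {1..n} \<Longrightarrow> p i = p j \<Longrightarrow> i = j"
  proof -
    fix i j assume i: "i \<in> {1..n}" and j: "j \<in> {1..n}" and e: "p i = p j"
    have "i - 1 = j - 1" using e dist len i j nth_eq_iff_index_eq
      unfolding p_def letter_at_def by fastforce
    thus "i = j" using i j by auto
  qed
  have pS: "\<And>i. i \<in> {1..n} \<Longrightarrow> p i \<in> R \<union> R'"
  proof -
    fix i assume i: "i \<in> {1..n}"
    have "\<pi> S ! (i - 1) \<in> set (\<pi> S)" using i len by auto
    thus "p i \<in> R \<union> R'" using st S_def unfolding p_def letter_at_def by simp
  qed
  have sR: "semi_frozen k n \<pi> R (H R) (W R)" using semi R_sub R_card by blast
  have sR': "semi_frozen k n \<pi> R' (H R') (W R')" using semi R'_sub R'_card by blast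
  have ih: "inj_on (H R) R" and hr: "H R ` R \<subseteq> {1..n}" and w: "{1..n} - H R ` R = {W R}"
    and dh: "\<forall>x\<in>R. p (H R x) = x \<or> p (W R) = x"
    using sR USR unfolding semi_frozen_def p_def by auto
  have ih': "inj_on (H R') R'" and hr': "H R' ` R' \<subseteq> {1..n}" and w': "{1..n} - H R' ` R' = {W R'}"
    and dh': "\<forall>x\<in>R'. p (H R' x) = x \<or> p (W R') = x"
    using sR' USR' unfolding semi_frozen_def p_def by auto
  have hqn: "H R q \<in> {1..n}" "H R' q \<in> {1..n}" "H R q' \<in> {1..n}" "H R' q' \<in> {1..n}"
    using hr hr' qQ q'Q RQ R'Q by auto
  have eq: "p (H R q) \<noteq> q \<or> p (H R' q) \<noteq> q" using pinj hqn hq by metis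
  have eq': "p (H R q') \<noteq> q' \<or> p (H R' q') \<noteq> q'" using pinj hqn hq' by metis
  have exc1: "\<And>x y. x \<in> R \<Longrightarrow> y \<in> R \<Longrightarrow> p (H R x) \<noteq> x \<Longrightarrow> p (H R y) \<noteq> y \<Longrightarrow> x = y"
    using dh by metis
  have exc2: "\<And>x y. x \<in> R' \<Longrightarrow> y \<in> R' \<Longrightarrow> p (H R' x) \<noteq> x \<Longrightarrow> p (H R' y) \<noteq> y \<Longrightarrow> x = y"
    using dh' by metis
  have "(p (H R q) \<noteq> q \<and> p (H R' q') \<noteq> q') \<or> (p (H R q') \<noteq> q' \<and> p (H R' q) \<noteq> q)"
    using eq eq' exc1[of q q'] exc2[of q q'] qQ q'Q RQ R'Q qq' by blast
  thus ?thesis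
  proof
    assume e: "p (H R q) \<noteq> q \<and> p (H R' q') \<noteq> q'"
    have "H R q = H R' r' \<and> H R r = H R' q' \<and> H R q' = W R' \<and> H R' q = W R \<and>
         (\<forall>q''\<in>Q - {q, q'}. H R q'' = H R' q'')"
      by (rule helper[OF pinj pS RQ R'Q rR' r'R ih hr w dh ih' hr' w' dh' qQ q'Q qq'])
         (use e in auto)
    thus ?thesis by auto
  next
    assume e: "p (H R q') \<noteq> q' \<and> p (H R' q) \<noteq> q"
    have "H R q' = H R' r' \<and> H R r = H R' q \<and> H R q = W R' \<and> H R' q' = W R \<and>
         (\<forall>q''\<in>Q - {q', q}. H R q'' = H R' q'')"
      by (rule helper[OF pinj pS RQ R'Q rR' r'R ih hr w dh ih' hr' w' dh' q'Q qQ qq'[symmetric]])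
         (use e in auto)
    thus ?thesis by (auto simp: insert_commute)
  qed
qed

end
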